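(* Let $\mathcal P=\mathcal P_n(\alpha,\ell)$ be a quasi-regular curvilinear $n$-gon (all interior angles equal to $\alpha$, all side lengths equal to $\ell$) with $\alpha\in(0,\pi)\setminus\mathcal E$. Then the set of its quasi-eigenvalues (as a set of values, without multiplicity) is $$\Big\{\tfrac1\ell\Big(\pm\arccos\big(\sin(\tfrac{\pi^2}{2\alpha})\cos(\tfrac{2\pi q}{n})\big)+2\pi m\Big):\ m\in\mathbb N\cup\{0\},\ q=0,1,\dots,\lfloor n/2\rfloor\Big\}\cap[0,+\infty).$$ Each such quasi-eigenvalue has multiplicity two, except in the following cases, where it has multiplicity one: (i) $\alpha\notin\mathcal S$ and $q=0$; (ii) $\alpha\notin\mathcal S$, $n$ even and $q=n/2$; (iii) $\alpha\in\mathcal S$ even, $q=0$ and $m=0$ (the quasi-eigenvalue $0$); (iv) $\alpha\in\mathcal S$ odd, $n$ even, $q=n/2$ and $m=0$ (the quasi-eigenvalue $0$).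
   Context: $\mathcal E=\{\pi/(2k):k\in\mathbb N\}$ (exceptional angles), $\mathcal S=\{\pi/(2k+1):k\in\mathbb N\}$ (special angles); a special angle $\pi/(2k+1)$ is called even or odd according as $k$ is even or odd. A curvilinear polygon $\mathcal P(\boldsymbol\alpha,\boldsymbol\ell)$: bounded simply connected planar domain bounded by $n$ smooth arcs of lengths $\ell_j$, vertices $V_1,\dots,V_n$ clockwise, interior angle $\alpha_j\in(0,\pi)$ at $V_j$. For $\alpha\notin\mathcal E$, $\mathtt A(\alpha)=\begin{pmatrix}\csc\frac{\pi^2}{2\alpha}&-i\cot\frac{\pi^2}{2\alpha}\\ i\cot\frac{\pi^2}{2\alpha}&\csc\frac{\pi^2}{2\alpha}\end{pmatrix}$, $\mathtt B(\ell,\sigma)=\operatorname{diag}(e^{i\ell\sigma},e^{-i\ell\sigma})$. For a polygon without exceptional angles, $\sigma\ge0$ is a quasi-eigenvalue iff $1$ is an eigenvalue of $\mathtt T(\sigma)=\mathtt A(\alpha_n)\mathtt B(\ell_n,\sigma)\cdots\mathtt A(\alpha_1)\mathtt B(\ell_1,\sigma)$; the multiplicity of a quasi-eigenvalue $\sigma>0$ is the geometric multiplicity of the eigenvalue $1$ of $\mathtt T(\sigma)$, and the quasi-eigenvalue $0$ (if present) has multiplicity $1$. *)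

theory Defs
  imports Complex_Main "Jordan_Normal_Form.Jordan_Normal_Form_Uniqueness"
begin

definition exceptional_angle :: "real \<Rightarrow> bool" where
  "exceptional_angle \<alpha> \<longleftrightarrow> (\<exists>k::nat. k \<ge> 1 \<and> \<alpha> = pi / (2 * real k))"

definition special_angle :: "real \<Rightarrow> bool" where
  "special_angle \<alpha> \<longleftrightarrow> (\<exists>k::nat. k \<ge> 1 \<and> \<alpha> = pi / (2 * real k + 1))"

definition even_special_angle :: "real \<Rightarrow> bool" where
  "even_special_angle \<alpha> \<longleftrightarrow> (\<exists>k::nat. k \<ge> 1 \<and> even k \<and> \<alpha> = pi / (2 * real k + 1))"

definition odd_special_angle :: "real \<Rightarrow> bool" where
  "odd_special_angle \<alpha> \<longleftrightarrow> (\<exists>k::nat. k \<ge> 1 \<and> odd k \<and> \<alpha> = pi / (2 * real k + 1))"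

definition A_mat :: "real \<Rightarrow> complex mat" where
  "A_mat \<alpha> = (let x = pi^2 / (2 * \<alpha>) in
     mat_of_rows_list 2
       [[complex_of_real (1 / sin x), - \<i> * complex_of_real (cot x)],
        [\<i> * complex_of_real (cot x), complex_of_real (1 / sin x)]])"

definition B_mat :: "real \<Rightarrow> real \<Rightarrow> complex mat" where
  "B_mat l \<sigma> = mat_of_rows_list 2
       [[exp (\<i> * complex_of_real (l * \<sigma>)), 0],
        [0, exp (- \<i> * complex_of_real (l * \<sigma>))]]"

text \<open>T(sigma) = A(alpha_n) B(l_n,sigma) ... A(alpha_1) B(l_1,sigma), where the polygon data
  is given as a list [(alpha_1,l_1), ..., (alpha_n,l_n)].\<close>
definition T_mat :: "(real \<times> real) list \<Rightarrow> real \<Rightarrow> complex mat" where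
  "T_mat P \<sigma> = foldl (\<lambda>M (\<alpha>, l). A_mat \<alpha> * B_mat l \<sigma> * M) (1\<^sub>m 2) P"

definition quasi_eigenvalue :: "(real \<times> real) list \<Rightarrow> real \<Rightarrow> bool" where
  "quasi_eigenvalue P \<sigma> \<longleftrightarrow> \<sigma> \<ge> 0 \<and> eigenvalue (T_mat P \<sigma>) 1"

definition qev_multiplicity :: "(real \<times> real) list \<Rightarrow> real \<Rightarrow> nat" where
  "qev_multiplicity P \<sigma> = (if \<sigma> = 0 then 1 else dim_gen_eigenspace (T_mat P \<sigma>) 1 1)"

definition quasi_regular :: "nat \<Rightarrow> real \<Rightarrow> real \<Rightarrow> (real \<times> real) list" where
  "quasi_regular n \<alpha> l = replicate n (\<alpha>, l)"

definition qr_value :: "nat \<Rightarrow> real \<Rightarrow> real \<Rightarrow> real \<Rightarrow> nat \<Rightarrow> nat \<Rightarrow> real" where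
  "qr_value n \<alpha> l s m q =
     (s * arccos (sin (pi^2 / (2 * \<alpha>)) * cos (2 * pi * real q / real n)) + 2 * pi * real m) / l"

end

theory Submission
  imports Defs
begin


definition m2 :: "complex \<Rightarrow> complex \<Rightarrow> complex \<Rightarrow> complex \<Rightarrow> complex mat" where
  "m2 a b c d = mat 2 2 (\<lambda>(i,j). if i = 0 then (if j = 0 then a else b) else (if j = 0 then c else d))"

lemma m2_carrier[simp]: "m2 a b c d \<in> carrier_mat 2 2"
  by (simp add: m2_def)

lemma m2_dims[simp]: "dim_row (m2 a b c d) = 2" "dim_col (m2 a b c d) = 2"
  by (simp_all add: m2_def)

lemma less2: "(i::nat) < 2 \<longleftrightarrow> i = 0 \<or> i = 1" by auto

lemma m2_idx[simp]: "m2 a b c d $$ (0,0) = a" "m2 a b c d $$ (0,1) = b"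
  "m2 a b c d $$ (1,0) = c" "m2 a b c d $$ (1,1) = d"
  by (simp_all add: m2_def)

lemma m2_eq_iff: "m2 a b c d = m2 a' b' c' d' \<longleftrightarrow> a = a' \<and> b = b' \<and> c = c' \<and> d = d'"
proof
  assume "m2 a b c d = m2 a' b' c' d'"
  then show "a = a' \<and> b = b' \<and> c = c' \<and> d = d'"
    by (metis m2_idx)
qed simp

lemma m2_ext: assumes "X \<in> carrier_mat 2 2"
  shows "X = m2 (X $$ (0,0)) (X $$ (0,1)) (X $$ (1,0)) (X $$ (1,1))"
  by (rule eq_matI, insert assms, auto simp: m2_def less2)

lemma sum2: "(\<Sum>i\<in>{0..<2::nat}. f i) = f 0 + f 1"
  by (simp add: numeral_2_eq_2)

lemma m2_mult: "m2 a b c d * m2 e f g h = m2 (a*e+b*g) (a*f+b*h) (c*e+d*g) (c*f+d*h)"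
  by (rule eq_matI, auto simp: less2 scalar_prod_def sum2 row_def col_def, auto simp: m2_def)

lemma one_m2: "1\<^sub>m 2 = m2 1 0 0 1"
  by (rule eq_matI, auto simp: less2, auto simp: m2_def)

lemma char_m2: "char_matrix (m2 a b c d) e = m2 (a-e) b c (d-e)"
  by (rule eq_matI, auto simp: char_matrix_def less2, auto simp: m2_def)

definition v2 :: "complex \<Rightarrow> complex \<Rightarrow> complex vec" where
  "v2 u v = vec 2 (\<lambda>i. if i = 0 then u else v)"

lemma m2_v2: "m2 a b c d *\<^sub>v v2 u v = v2 (a*u+b*v) (c*u+d*v)"
  by (rule eq_vecI, auto simp: less2 m2_def v2_def row_def scalar_prod_def sum2)

lemma v2_carrier[simp]: "v2 u v \<in> carrier_vec 2" by (simp add: v2_def)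

lemma v2_zero: "v2 u v = 0\<^sub>v 2 \<longleftrightarrow> u = 0 \<and> v = 0"
proof
  assume "v2 u v = 0\<^sub>v 2"
  hence "v2 u v $ 0 = 0" "v2 u v $ 1 = 0" by auto
  thus "u = 0 \<and> v = 0" by (simp_all add: v2_def)
qed (rule eq_vecI, auto simp: v2_def)

lemma v2_ext: "w \<in> carrier_vec 2 \<Longrightarrow> w = v2 (w $ 0) (w $ 1)"
  by (rule eq_vecI, auto simp: v2_def less2)

lemma eigenvalue_m2: "eigenvalue (m2 a b c d) e \<longleftrightarrow> (a-e)*(d-e) - b*c = 0"
proof -
  have "eigenvalue (m2 a b c d) e \<longleftrightarrow> (\<exists>u v. (u \<noteq> 0 \<or> v \<noteq> 0) \<and> (a-e)*u + b*v = 0 \<and> c*u + (d-e)*v = 0)"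
    unfolding eigenvalue_def eigenvector_char_matrix[OF m2_carrier] char_m2
  proof
    assume "\<exists>w. w \<in> carrier_vec 2 \<and> w \<noteq> 0\<^sub>v 2 \<and> m2 (a - e) b c (d - e) *\<^sub>v w = 0\<^sub>v 2"
    then obtain w where w: "w \<in> carrier_vec 2" "w \<noteq> 0\<^sub>v 2" "m2 (a - e) b c (d - e) *\<^sub>v w = 0\<^sub>v 2" by blast
    have "w = v2 (w$0) (w$1)" using v2_ext[OF w(1)] .
    with w show "\<exists>u v. (u \<noteq> 0 \<or> v \<noteq> 0) \<and> (a - e) * u + b * v = 0 \<and> c * u + (d - e) * v = 0"
      by (metis m2_v2 v2_zero)
  next
    assume "\<exists>u v. (u \<noteq> 0 \<or> v \<noteq> 0) \<and> (a - e) * u + b * v = 0 \<and> c * u + (d - e) * v = 0"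
    then obtain u v where "u \<noteq> 0 \<or> v \<noteq> 0" "(a - e) * u + b * v = 0" "c * u + (d - e) * v = 0" by blast
    thus "\<exists>w. w \<in> carrier_vec 2 \<and> w \<noteq> 0\<^sub>v 2 \<and> m2 (a - e) b c (d - e) *\<^sub>v w = 0\<^sub>v 2"
      by (intro exI[of _ "v2 u v"], auto simp: m2_v2 v2_zero)
  qed
  also have "\<dots> \<longleftrightarrow> (a-e)*(d-e) - b*c = 0" (is "?L \<longleftrightarrow> ?R")
  proof
    assume ?L
    then obtain u v where uv: "u \<noteq> 0 \<or> v \<noteq> 0" "(a - e) * u + b * v = 0" "c * u + (d - e) * v = 0" by blast
    have "((a-e)*(d-e) - b*c) * u = (d-e)*((a - e) * u + b * v) - b*(c * u + (d - e) * v)"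
      "((a-e)*(d-e) - b*c) * v = (a-e)*(c * u + (d - e) * v) - c*((a - e) * u + b * v)"
      by (simp_all add: algebra_simps)
    hence "((a-e)*(d-e) - b*c) * u = 0" "((a-e)*(d-e) - b*c) * v = 0"
      using uv(2,3) by simp_all
    with uv(1) show ?R by auto
  next
    assume R: ?R
    show ?L
    proof (cases "a - e = 0 \<and> b = 0")
      case True
      show ?thesis
      proof (cases "c = 0 \<and> d - e = 0")
        case True2: True
        show ?thesis by (rule exI[of _ 1], rule exI[of _ 0], insert True True2, auto)
      next
        case False
        show ?thesis by (rule exI[of _ "d - e"], rule exI[of _ "-c"], insert True False, auto simp: algebra_simps)
      qed
    next
      case False
      show ?thesis by (rule exI[of _ b], rule exI[of _ "-(a-e)"], insert False R, auto simp: algebra_simps)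
    qed
  qed
  finally show ?thesis .
qed



lemma kd_transfer:
  assumes C: "C \<in> carrier_mat 2 2" and P: "P \<in> carrier_mat 2 2" and Q: "Q \<in> carrier_mat 2 2"
    and QP: "Q * P = 1\<^sub>m 2"
  shows "kernel_dim (P * C) = kernel_dim C"
proof -
  interpret K: kernel 2 2 "P * C" by (unfold_locales, insert P C, auto)
  interpret K2: kernel 2 2 C by (unfold_locales, insert C, auto)
  from mat_kernel_mult_eq[OF C P Q QP]
  have "mat_kernel (P * C) = mat_kernel C" .
  hence "K.dim = K2.dim" by simp
  thus ?thesis using K.kernel_dim K2.kernel_dim by simp
qed

lemma kd_echelon:
  assumes "row_echelon_form R" "R \<in> carrier_mat 2 2"
  shows "kernel_dim R = 2 - card {i. i < 2 \<and> row R i \<noteq> 0\<^sub>v 2}"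
proof -
  interpret K: kernel 2 2 R by (unfold_locales, insert assms, auto)
  show ?thesis using find_base_vectors(6)[OF assms] K.kernel_dim by simp
qed

lemma kd_zero: "kernel_dim (m2 0 0 0 0) = 2"
proof -
  have re: "row_echelon_form (m2 0 0 0 0)"
    unfolding row_echelon_form_def
    by (rule exI[of _ "\<lambda>_. 2"], rule pivot_funI, auto simp: less2 m2_def)
  have r: "\<And>i. i < 2 \<Longrightarrow> row (m2 0 0 0 0) i = 0\<^sub>v 2"
    by (rule eq_vecI, auto simp: row_def m2_def)
  have e: "{i. i < 2 \<and> row (m2 0 0 0 0) i \<noteq> 0\<^sub>v 2} = {}"
    using r by blast
  show ?thesis unfolding kd_echelon[OF re m2_carrier] e by simp
qed

lemma kd_row1: "kernel_dim (m2 1 y 0 0) = 1"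
proof -
  have re: "row_echelon_form (m2 1 y 0 0)"
    unfolding row_echelon_form_def
    by (rule exI[of _ "\<lambda>i. if i = 0 then 0 else 2"], rule pivot_funI, auto simp: less2 m2_def)
  have "{i. i < 2 \<and> row (m2 1 y 0 0) i \<noteq> 0\<^sub>v 2} = {0}"
  proof -
    have "row (m2 1 y 0 0) 0 \<noteq> 0\<^sub>v 2"
    proof
      assume "row (m2 1 y 0 0) 0 = 0\<^sub>v 2"
      hence "row (m2 1 y 0 0) 0 $ 0 = 0" by simp
      thus False by (simp add: row_def m2_def)
    qed
    moreover have "row (m2 1 y 0 0) 1 = 0\<^sub>v 2"
      by (rule eq_vecI, auto simp: row_def m2_def)
    ultimately show ?thesis by (auto simp: less2)
  qed
  thus ?thesis using kd_echelon[OF re] by simp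
qed

lemma kd_row2: "kernel_dim (m2 0 1 0 0) = 1"
proof -
  have re: "row_echelon_form (m2 0 1 0 0)"
    unfolding row_echelon_form_def
    by (rule exI[of _ "\<lambda>i. if i = 0 then 1 else 2"], rule pivot_funI, auto simp: less2 m2_def)
  have "{i. i < 2 \<and> row (m2 0 1 0 0) i \<noteq> 0\<^sub>v 2} = {0}"
  proof -
    have "row (m2 0 1 0 0) 0 \<noteq> 0\<^sub>v 2"
    proof
      assume "row (m2 0 1 0 0) 0 = 0\<^sub>v 2"
      hence "row (m2 0 1 0 0) 0 $ 1 = 0" by simp
      thus False by (simp add: row_def m2_def)
    qed
    moreover have "row (m2 0 1 0 0) 1 = 0\<^sub>v 2"
      by (rule eq_vecI, auto simp: row_def m2_def)
    ultimately show ?thesis by (auto simp: less2)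
  qed
  thus ?thesis using kd_echelon[OF re] by simp
qed

lemma kd_one:
  assumes nz: "\<not> (a = 0 \<and> b = 0 \<and> c = 0 \<and> d = 0)" and det: "a*d - b*c = 0"
  shows "kernel_dim (m2 a b c d) = 1"
proof -
  have tr: "kernel_dim (m2 a b c d) = kernel_dim (m2 p1 p2 p3 p4 * m2 a b c d)"
    if "m2 q1 q2 q3 q4 * m2 p1 p2 p3 p4 = 1\<^sub>m 2" for p1 p2 p3 p4 q1 q2 q3 q4
    using kd_transfer[OF m2_carrier m2_carrier m2_carrier that] by simp
  show ?thesis
  proof (cases "a = 0")
    case False
    have "m2 a 0 c 1 * m2 (1/a) 0 (-c/a) 1 = 1\<^sub>m 2"
      using False by (simp add: m2_mult one_m2 m2_eq_iff field_simps)
    from tr[OF this] have "kernel_dim (m2 a b c d) = kernel_dim (m2 1 (b/a) 0 0)"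
      using False det by (simp add: m2_mult field_simps)
    thus ?thesis using kd_row1 by simp
  next
    case a: True
    show ?thesis
    proof (cases "b = 0")
      case False
      with det a have c: "c = 0" by simp
      have "m2 b 0 d 1 * m2 (1/b) 0 (-d/b) 1 = 1\<^sub>m 2"
        using False by (simp add: m2_mult one_m2 m2_eq_iff field_simps)
      from tr[OF this] have "kernel_dim (m2 a b c d) = kernel_dim (m2 0 1 0 0)"
        using False a c by (simp add: m2_mult field_simps)
      thus ?thesis using kd_row2 by simp
    next
      case b: True
      show ?thesis
      proof (cases "c = 0")
        case False
        have "m2 0 1 c 0 * m2 0 (1/c) 1 0 = 1\<^sub>m 2"
          using False by (simp add: m2_mult one_m2 m2_eq_iff field_simps)
        from tr[OF this] have "kernel_dim (m2 a b c d) = kernel_dim (m2 1 (d/c) 0 0)"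
          using False a b by (simp add: m2_mult field_simps)
        thus ?thesis using kd_row1 by simp
      next
        case c: True
        with nz a b have d: "d \<noteq> 0" by simp
        have "m2 0 1 d 0 * m2 0 (1/d) 1 0 = 1\<^sub>m 2"
          using d by (simp add: m2_mult one_m2 m2_eq_iff field_simps)
        from tr[OF this] have "kernel_dim (m2 a b c d) = kernel_dim (m2 0 1 0 0)"
          using d a b c by (simp add: m2_mult field_simps)
        thus ?thesis using kd_row2 by simp
      qed
    qed
  qed
qed



fun cheb :: "real \<Rightarrow> nat \<Rightarrow> real" where
  "cheb \<tau> 0 = 0"
| "cheb \<tau> (Suc 0) = 1"
| "cheb \<tau> (Suc (Suc n)) = \<tau> * cheb \<tau> (Suc n) - cheb \<tau> n"

lemma lin_rec_eq:
  fixes f g :: "nat \<Rightarrow> real"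
  assumes "\<And>n. f (Suc (Suc n)) = \<tau> * f (Suc n) - f n"
    "\<And>n. g (Suc (Suc n)) = \<tau> * g (Suc n) - g n" "f 0 = g 0" "f 1 = g 1"
  shows "f n = g n"
proof -
  have "f n = g n \<and> f (Suc n) = g (Suc n)"
    by (induction n, insert assms, auto)
  thus ?thesis by simp
qed

lemma cheb_cassini: "(cheb \<tau> (Suc n))^2 - \<tau> * cheb \<tau> (Suc n) * cheb \<tau> n + (cheb \<tau> n)^2 = 1"
proof (induction n)
  case 0 then show ?case by simp
next
  case (Suc n)
  then show ?case by (simp add: power2_eq_square algebra_simps)
qed

lemma m2_step:
  fixes u1 u0 a b c d :: complex
  assumes bc: "a*d - b*c = 1"
  shows "m2 (u1 * a - u0) (u1 * b) (u1 * c) (u1 * d - u0) * m2 a b c d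
       = m2 (((a+d)*u1 - u0) * a - u1) (((a+d)*u1 - u0) * b) (((a+d)*u1 - u0) * c) (((a+d)*u1 - u0) * d - u1)"
  unfolding m2_mult m2_eq_iff
proof (intro conjI)
  have e: "b * c = a * d - 1" using bc by (simp add: algebra_simps)
  have "u1 * b * c = u1 * (a*d - 1)" using e by (metis mult.assoc)
  thus "(u1 * a - u0) * a + u1 * b * c = ((a + d) * u1 - u0) * a - u1"
    by (simp add: algebra_simps)
  show "(u1 * a - u0) * b + u1 * b * d = ((a + d) * u1 - u0) * b" by (simp add: algebra_simps)
  show "u1 * c * a + (u1 * d - u0) * c = ((a + d) * u1 - u0) * c" by (simp add: algebra_simps)
  have "u1 * c * b = u1 * (a*d - 1)" using e by (simp add: mult.commute mult.left_commute)
  thus "u1 * c * b + (u1 * d - u0) * d = ((a + d) * u1 - u0) * d - u1" by (simp add: algebra_simps)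
qed

lemma m2_pow:
  assumes det: "a*d - b*c = 1" and tr: "a + d = complex_of_real \<tau>"
  shows "m2 a b c d ^\<^sub>m Suc n =
    m2 (of_real (cheb \<tau> (Suc n)) * a - of_real (cheb \<tau> n)) (of_real (cheb \<tau> (Suc n)) * b)
       (of_real (cheb \<tau> (Suc n)) * c) (of_real (cheb \<tau> (Suc n)) * d - of_real (cheb \<tau> n))"
proof (induction n)
  case 0
  have "m2 a b c d ^\<^sub>m Suc 0 = 1\<^sub>m 2 * m2 a b c d" by simp
  also have "\<dots> = m2 a b c d" by simp
  finally show ?case by simp
next
  case (Suc n)
  show ?case
    unfolding pow_mat.simps(2)[of _ "Suc n"] Suc m2_step[OF det] tr by simp
qed

definition trc :: "real \<Rightarrow> nat \<Rightarrow> real" where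
  "trc \<tau> n = \<tau> * cheb \<tau> (Suc n) - 2 * cheb \<tau> n"

lemma trc_rec: "trc \<tau> (Suc (Suc n)) = \<tau> * trc \<tau> (Suc n) - trc \<tau> n"
  by (simp add: trc_def algebra_simps)

lemma eigen_pow:
  assumes det: "a*d - b*c = 1" and tr: "a + d = complex_of_real \<tau>"
  shows "eigenvalue (m2 a b c d ^\<^sub>m Suc n) 1 \<longleftrightarrow> trc \<tau> n = 2"
proof -
  define U1 where "U1 = cheb \<tau> (Suc n)"
  define U0 where "U0 = cheb \<tau> n"
  have cas: "U1^2 - \<tau> * U1 * U0 + U0^2 = 1" unfolding U1_def U0_def by (rule cheb_cassini)
  have "(of_real U1 * a - of_real U0 - 1) * (of_real U1 * d - of_real U0 - 1) - (of_real U1 * b) * (of_real U1 * c)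
     = (of_real U1)^2 * (a*d - b*c) - of_real U1 * of_real U0 * (a + d) + (of_real U0)^2 + 1 - ((a+d) * of_real U1 - 2 * of_real U0)"
    by (simp add: algebra_simps power2_eq_square)
  also have "\<dots> = complex_of_real (U1^2 - \<tau> * U1 * U0 + U0^2 + 1 - (\<tau> * U1 - 2 * U0))"
    unfolding det tr by simp
  also have "\<dots> = complex_of_real (2 - (\<tau> * U1 - 2 * U0))" using cas by simp
  finally have D: "(of_real U1 * a - of_real U0 - 1) * (of_real U1 * d - of_real U0 - 1) - (of_real U1 * b) * (of_real U1 * c)
     = complex_of_real (2 - trc \<tau> n)" unfolding trc_def U1_def U0_def .
  have e: "complex_of_real (2 - trc \<tau> n) = 0 \<longleftrightarrow> trc \<tau> n = 2"
    by (metis eq_iff_diff_eq_0 of_real_eq_0_iff)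
  show ?thesis unfolding m2_pow[OF det tr] eigenvalue_m2 U1_def[symmetric] U0_def[symmetric] D e ..
qed

lemma cheb_sin: "cheb (2 * cos \<phi>) n * sin \<phi> = sin (real n * \<phi>)"
proof (rule lin_rec_eq[where \<tau> = "2 * cos \<phi>"])
  fix n
  show "cheb (2 * cos \<phi>) (Suc (Suc n)) * sin \<phi> = 2 * cos \<phi> * (cheb (2 * cos \<phi>) (Suc n) * sin \<phi>) - cheb (2 * cos \<phi>) n * sin \<phi>"
    by (simp add: algebra_simps)
  have "sin ((real n + 1) * \<phi> + \<phi>) + sin ((real n + 1) * \<phi> - \<phi>) = 2 * cos \<phi> * sin ((real n + 1) * \<phi>)"
    by (simp add: sin_add sin_diff)
  thus "sin (real (Suc (Suc n)) * \<phi>) = 2 * cos \<phi> * sin (real (Suc n) * \<phi>) - sin (real n * \<phi>)"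
    by (simp add: algebra_simps)
qed (auto)

lemma trc_cos: "trc (2 * cos \<phi>) n = 2 * cos ((real n + 1) * \<phi>)"
proof (rule lin_rec_eq[where \<tau> = "2 * cos \<phi>"])
  fix n
  show "trc (2 * cos \<phi>) (Suc (Suc n)) = 2 * cos \<phi> * trc (2 * cos \<phi>) (Suc n) - trc (2 * cos \<phi>) n"
    by (rule trc_rec)
  have "cos ((real n + 2) * \<phi> + \<phi>) + cos ((real n + 2) * \<phi> - \<phi>) = 2 * cos \<phi> * cos ((real n + 2) * \<phi>)"
    by (simp add: cos_add cos_diff)
  thus "2 * cos ((real (Suc (Suc n)) + 1) * \<phi>) = 2 * cos \<phi> * (2 * cos ((real (Suc n) + 1) * \<phi>)) - 2 * cos ((real n + 1) * \<phi>)"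
    by (simp add: algebra_simps)
next
  show "trc (2 * cos \<phi>) 0 = 2 * cos ((real 0 + 1) * \<phi>)" by (simp add: trc_def)
  show "trc (2 * cos \<phi>) 1 = 2 * cos ((real 1 + 1) * \<phi>)"
  proof -
    have "(real 1 + 1) * \<phi> = 2 * \<phi>" by simp
    hence "cos ((real 1 + 1) * \<phi>) = 2 * cos \<phi> ^ 2 - 1" by (simp only: cos_double_cos)
    thus ?thesis by (simp add: trc_def power2_eq_square)
  qed
qed

lemma cheb_2: "cheb 2 n = real n"
  by (rule lin_rec_eq[where \<tau> = 2], auto simp: algebra_simps)

lemma cheb_m2: "cheb (-2) n = (-1)^(Suc n) * real n"
  by (rule lin_rec_eq[where \<tau> = "-2"], auto simp: algebra_simps)

lemma trc_big:
  assumes "\<bar>\<tau>\<bar> > 2"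
  shows "\<bar>trc \<tau> n\<bar> > 2"
proof -
  have "\<bar>trc \<tau> (Suc n)\<bar> > \<bar>trc \<tau> n\<bar> \<and> \<bar>trc \<tau> n\<bar> > 2"
  proof (induction n)
    case 0
    have t0: "trc \<tau> 0 = \<tau>" "trc \<tau> 1 = \<tau> * \<tau> - 2" by (simp_all add: trc_def)
    have "\<bar>\<tau>\<bar> * \<bar>\<tau>\<bar> > 2 * \<bar>\<tau>\<bar>" using assms by (intro mult_strict_right_mono) auto
    moreover have "\<bar>\<tau>\<bar> * \<bar>\<tau>\<bar> = \<tau> * \<tau>" by (rule abs_mult_self_eq)
    ultimately have "\<tau> * \<tau> - 2 > \<bar>\<tau>\<bar>" using assms by linarith
    then show ?case using assms unfolding t0 One_nat_def[symmetric] by linarith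
  next
    case (Suc n)
    let ?a = "trc \<tau> n" and ?b = "trc \<tau> (Suc n)"
    have "\<bar>\<tau>\<bar> * \<bar>?b\<bar> > 2 * \<bar>?b\<bar>" using assms Suc.IH by (intro mult_strict_right_mono) auto
    moreover have "\<bar>\<tau> * ?b - ?a\<bar> \<ge> \<bar>\<tau>\<bar> * \<bar>?b\<bar> - \<bar>?a\<bar>" using abs_triangle_ineq2[of "\<tau> * ?b" ?a] by (simp add: abs_mult)
    ultimately show ?case using Suc.IH trc_rec[of \<tau> n] by linarith
  qed
  thus ?thesis by simp
qed



lemma cos_inv:
  assumes "-1 \<le> y" "y \<le> 1"
  shows "cos \<theta> = y \<longleftrightarrow> (\<exists>s\<in>{-1,1::real}. \<exists>m::int. \<theta> = s * arccos y + 2*pi*m)"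
proof
  define a where "a = arccos y"
  have ca: "cos a = y" unfolding a_def using assms by (simp add: cos_arccos)
  assume c: "cos \<theta> = y"
  have "(sin \<theta>)^2 = (sin a)^2" using c ca sin_cos_squared_add[of \<theta>] sin_cos_squared_add[of a] by simp
  hence "sin \<theta> = sin a \<or> sin \<theta> = - sin a" by (metis power2_eq_iff)
  thus "\<exists>s\<in>{-1,1::real}. \<exists>m::int. \<theta> = s * arccos y + 2*pi*m"
  proof
    assume "sin \<theta> = sin a"
    with c ca obtain m where "\<theta> = a + 2*pi*real_of_int m" using sin_cos_eq_iff by metis
    thus ?thesis unfolding a_def by (intro bexI[of _ 1]) auto
  next
    assume "sin \<theta> = - sin a"
    hence "sin \<theta> = sin (-a) \<and> cos \<theta> = cos (-a)" using c ca by simp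
    then obtain m where "\<theta> = -a + 2*pi*real_of_int m" using sin_cos_eq_iff by metis
    thus ?thesis unfolding a_def by (intro bexI[of _ "-1"]) auto
  qed
next
  assume "\<exists>s\<in>{-1,1::real}. \<exists>m::int. \<theta> = s * arccos y + 2*pi*m"
  then obtain s and m :: int where s: "s \<in> {-1,1}" and th: "\<theta> = s * arccos y + 2*pi*m" by blast
  have "sin \<theta> = sin (s * arccos y) \<and> cos \<theta> = cos (s * arccos y)"
    unfolding sin_cos_eq_iff th by auto
  hence "cos \<theta> = cos (s * arccos y)" by simp
  also have "\<dots> = cos (arccos y)" using s by auto
  also have "\<dots> = y" using assms by (simp add: cos_arccos)
  finally show "cos \<theta> = y" .
qed

lemma trc_eq2:
  assumes n: "n \<ge> 1"
  shows "trc \<tau> (n - 1) = 2 \<longleftrightarrow> (\<exists>q. 2*q \<le> n \<and> \<tau> = 2*cos(2*pi*real q/real n))"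
proof
  assume t: "trc \<tau> (n - 1) = 2"
  have "\<not> \<bar>\<tau>\<bar> > 2" using trc_big[of \<tau> "n-1"] t by auto
  hence b: "-1 \<le> \<tau>/2" "\<tau>/2 \<le> 1" by auto
  define \<phi> where "\<phi> = arccos (\<tau>/2)"
  have tau: "\<tau> = 2 * cos \<phi>" unfolding \<phi>_def using b by (simp add: cos_arccos)
  have p: "0 \<le> \<phi>" "\<phi> \<le> pi" unfolding \<phi>_def using b by (auto intro: arccos_lbound arccos_ubound)
  have nn: "real (n - 1) + 1 = real n" using n by simp
  from t have "2 * cos (real n * \<phi>) = 2" unfolding tau trc_cos nn .
  hence "cos (real n * \<phi>) = 1" by simp
  then obtain k :: int where k: "real n * \<phi> = real_of_int k * 2 * pi" using cos_one_2pi_int by metis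
  have "real n * \<phi> \<ge> 0" using p by simp
  hence "real_of_int k * 2 * pi \<ge> 0" using k by simp
  hence k0: "k \<ge> 0" using pi_gt_zero by (auto simp: zero_le_mult_iff)
  have "real_of_int k * 2 * pi \<le> real n * pi" using k p(2) by (metis mult_left_mono of_nat_0_le_iff)
  hence "real_of_int k * 2 \<le> real n" by simp
  hence k2: "2 * nat k \<le> n" using k0 by linarith
  have "\<phi> = 2 * pi * real (nat k) / real n" using k k0 n by (simp add: field_simps)
  with k2 tau show "\<exists>q. 2*q \<le> n \<and> \<tau> = 2*cos(2*pi*real q/real n)" by blast
next
  assume "\<exists>q. 2*q \<le> n \<and> \<tau> = 2*cos(2*pi*real q/real n)"
  then obtain q where q: "2*q \<le> n" "\<tau> = 2*cos(2*pi*real q/real n)" by blast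
  have nn: "real (n - 1) + 1 = real n" using n by simp
  have "trc \<tau> (n - 1) = 2 * cos (real n * (2*pi*real q/real n))" unfolding q(2) trc_cos nn ..
  also have "real n * (2*pi*real q/real n) = 2 * pi * real q" using n by simp
  also have "2 * cos (2 * pi * real q) = 2" using cos_int_2pin[of "int q"] by simp
  finally show "trc \<tau> (n - 1) = 2" .
qed

lemma x_gt:
  assumes "0 < \<alpha>" "\<alpha> < pi"
  shows "pi^2 / (2*\<alpha>) > pi / 2"
proof -
  have "pi / 2 * (2*\<alpha>) < pi^2" using assms by (simp add: power2_eq_square)
  thus ?thesis using assms by (simp add: field_simps)
qed

lemma sin_ne0:
  assumes "0 < \<alpha>" "\<alpha> < pi" "\<not> exceptional_angle \<alpha>"
  shows "sin (pi^2 / (2*\<alpha>)) \<noteq> 0"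
proof
  assume "sin (pi^2 / (2*\<alpha>)) = 0"
  then obtain i :: int where i: "pi^2 / (2*\<alpha>) = real_of_int i * pi" using sin_zero_iff_int2 by metis
  have "real_of_int i * pi > 0" using x_gt[OF assms(1,2)] i by simp
  hence i0: "i > 0" by (simp add: zero_less_mult_iff)
  have "\<alpha> = pi / (2 * real (nat i))" using i i0 assms(1) by (simp add: field_simps power2_eq_square)
  moreover have "nat i \<ge> 1" using i0 by simp
  ultimately show False using assms(3) unfolding exceptional_angle_def by blast
qed

lemma special_sin_cos:
  assumes "\<alpha> = pi / (2 * real k + 1)"
  shows "sin (pi^2 / (2*\<alpha>)) = (-1)^k" "cos (pi^2 / (2*\<alpha>)) = 0"
proof -
  have x: "pi^2 / (2*\<alpha>) = real k * pi + pi/2" unfolding assms by (simp add: field_simps power2_eq_square)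
  show "sin (pi^2 / (2*\<alpha>)) = (-1)^k" unfolding x by (simp add: sin_add cos_npi)
  show "cos (pi^2 / (2*\<alpha>)) = 0" unfolding x by (simp add: cos_add)
qed

lemma special_iff:
  assumes "0 < \<alpha>" "\<alpha> < pi"
  shows "cos (pi^2 / (2*\<alpha>)) = 0 \<longleftrightarrow> special_angle \<alpha>"
proof
  assume "cos (pi^2 / (2*\<alpha>)) = 0"
  then obtain i :: int where i: "odd i" "pi^2 / (2*\<alpha>) = real_of_int i * (pi/2)" using cos_zero_iff_int by metis
  have "real_of_int i * (pi/2) > 1 * (pi / 2)" using x_gt[OF assms] i by simp
  hence "i > 1" by (simp only: mult_less_cancel_right) simp
  from i(1) obtain j where j: "i = 2 * j + 1" by (rule oddE)
  define k where "k = nat j"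
  have k: "real_of_int i = 2 * real k + 1" "k \<ge> 1" using j \<open>i > 1\<close> unfolding k_def by auto
  have "\<alpha> = pi / (2 * real k + 1)" using i(2) assms(1) \<open>i > 1\<close> unfolding k(1)[symmetric] by (simp add: field_simps power2_eq_square)
  thus "special_angle \<alpha>" unfolding special_angle_def using k(2) by blast
next
  assume "special_angle \<alpha>"
  then obtain k where "\<alpha> = pi / (2 * real k + 1)" unfolding special_angle_def by blast
  thus "cos (pi^2 / (2*\<alpha>)) = 0" by (rule special_sin_cos)
qed

lemma special_parity:
  assumes "special_angle \<alpha>"
  shows "sin (pi^2 / (2*\<alpha>)) = 1 \<Longrightarrow> even_special_angle \<alpha>"
    "sin (pi^2 / (2*\<alpha>)) = -1 \<Longrightarrow> odd_special_angle \<alpha>"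
    "even_special_angle \<alpha> \<Longrightarrow> sin (pi^2 / (2*\<alpha>)) = 1"
    "odd_special_angle \<alpha> \<Longrightarrow> sin (pi^2 / (2*\<alpha>)) = -1"
proof -
  obtain k where k: "k \<ge> 1" "\<alpha> = pi / (2 * real k + 1)" using assms unfolding special_angle_def by blast
  note s = special_sin_cos(1)[OF k(2)]
  show "sin (pi^2 / (2*\<alpha>)) = 1 \<Longrightarrow> even_special_angle \<alpha>"
  proof -
    assume "sin (pi^2 / (2*\<alpha>)) = 1"
    hence "even k" using s by (cases "even k") auto
    thus ?thesis using k unfolding even_special_angle_def by blast
  qed
  show "sin (pi^2 / (2*\<alpha>)) = -1 \<Longrightarrow> odd_special_angle \<alpha>"
  proof -
    assume "sin (pi^2 / (2*\<alpha>)) = -1"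
    hence "odd k" using s by (cases "even k") auto
    thus ?thesis using k unfolding odd_special_angle_def by blast
  qed
  show "even_special_angle \<alpha> \<Longrightarrow> sin (pi^2 / (2*\<alpha>)) = 1"
    unfolding even_special_angle_def using special_sin_cos(1) by fastforce
  show "odd_special_angle \<alpha> \<Longrightarrow> sin (pi^2 / (2*\<alpha>)) = -1"
    unfolding odd_special_angle_def using special_sin_cos(1) by fastforce
qed



lemma A_m2: "A_mat \<alpha> = m2 (of_real (1 / sin (pi^2/(2*\<alpha>)))) (- \<i> * of_real (cot (pi^2/(2*\<alpha>))))
   (\<i> * of_real (cot (pi^2/(2*\<alpha>)))) (of_real (1 / sin (pi^2/(2*\<alpha>))))"
  unfolding A_mat_def Let_def
  by (rule eq_matI, auto simp: mat_of_rows_list_def less2, auto simp: m2_def)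

lemma B_m2: "B_mat l \<sigma> = m2 (cis (l*\<sigma>)) 0 0 (cis (-(l*\<sigma>)))"
proof -
  have "exp (- \<i> * complex_of_real (l * \<sigma>)) = cis (-(l*\<sigma>))" by (simp add: cis_conv_exp)
  moreover have "exp (\<i> * complex_of_real (l * \<sigma>)) = cis (l*\<sigma>)" by (simp add: cis_conv_exp)
  ultimately show ?thesis unfolding B_mat_def
    by (intro eq_matI, auto simp: mat_of_rows_list_def less2, auto simp: m2_def)
qed

lemma T_pow: "T_mat (replicate n (\<alpha>,l)) \<sigma> = (A_mat \<alpha> * B_mat l \<sigma>) ^\<^sub>m n"
proof -
  define N where "N = A_mat \<alpha> * B_mat l \<sigma>"
  have N: "N \<in> carrier_mat 2 2" unfolding N_def A_m2 B_m2 m2_mult by (rule m2_carrier)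
  define f where "f = (\<lambda>M (\<alpha>, l). A_mat \<alpha> * B_mat l \<sigma> * M)"
  have fZ: "f Z (\<alpha>, l) = N * Z" for Z unfolding f_def N_def by simp
  have "\<forall>Z \<in> carrier_mat 2 2. foldl f Z (replicate n (\<alpha>,l)) = N ^\<^sub>m n * Z"
  proof (induction n)
    case 0
    show ?case
    proof
      fix Z :: "complex mat" assume Z: "Z \<in> carrier_mat 2 2"
      have "N ^\<^sub>m 0 = 1\<^sub>m 2" using N by simp
      thus "foldl f Z (replicate 0 (\<alpha>,l)) = N ^\<^sub>m 0 * Z" using Z by simp
    qed
  next
    case (Suc n)
    show ?case
    proof
      fix Z :: "complex mat" assume Z: "Z \<in> carrier_mat 2 2"
      have NZ: "N * Z \<in> carrier_mat 2 2" using N Z by simp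
      have "foldl f Z (replicate (Suc n) (\<alpha>,l)) = foldl f (f Z (\<alpha>, l)) (replicate n (\<alpha>,l))"
        by (simp only: replicate_Suc foldl_Cons)
      also have "\<dots> = N ^\<^sub>m n * (N * Z)" unfolding fZ by (rule Suc[rule_format, OF NZ])
      also have "\<dots> = N ^\<^sub>m n * N * Z"
        using N Z by (intro assoc_mult_mat[symmetric]) auto
      also have "\<dots> = N ^\<^sub>m Suc n * Z" by simp
      finally show "foldl f Z (replicate (Suc n) (\<alpha>,l)) = N ^\<^sub>m Suc n * Z" .
    qed
  qed
  hence "foldl f (1\<^sub>m 2) (replicate n (\<alpha>,l)) = N ^\<^sub>m n * 1\<^sub>m 2"
    by (rule bspec) simp
  also have "\<dots> = N ^\<^sub>m n" using N by simp
  finally show ?thesis unfolding T_mat_def N_def f_def .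
qed

lemma M_props:
  assumes s: "sin x \<noteq> 0"
  defines "c \<equiv> complex_of_real (1 / sin x)" and "t \<equiv> complex_of_real (cot x)"
  shows "(c * cis \<theta>) * (c * cis (-\<theta>)) - (- \<i> * t * cis (-\<theta>)) * (\<i> * t * cis \<theta>) = 1"
    "c * cis \<theta> + c * cis (-\<theta>) = complex_of_real (2 * cos \<theta> / sin x)"
proof -
  have e: "cis \<theta> * cis (-\<theta>) = 1" by (simp add: cis_mult)
  have "(c * cis \<theta>) * (c * cis (-\<theta>)) - (- \<i> * t * cis (-\<theta>)) * (\<i> * t * cis \<theta>)
      = (c*c - t*t) * (cis \<theta> * cis (-\<theta>))" by (simp add: algebra_simps)
  also have "\<dots> = c*c - t*t" unfolding e by simp
  also have "c*c - t*t = complex_of_real (1/sin x * (1/sin x) - cot x * cot x)"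
    unfolding c_def t_def by simp
  also have "1/sin x * (1/sin x) - cot x * cot x = 1"
    using s sin_cos_squared_add[of x] by (simp add: cot_def field_simps power2_eq_square)
  finally show "(c * cis \<theta>) * (c * cis (-\<theta>)) - (- \<i> * t * cis (-\<theta>)) * (\<i> * t * cis \<theta>) = 1" by simp
  have "cis \<theta> + cis (-\<theta>) = complex_of_real (2 * cos \<theta>)" by (simp add: complex_eq_iff)
  hence "c * cis \<theta> + c * cis (-\<theta>) = c * complex_of_real (2 * cos \<theta>)" by (simp add: distrib_left[symmetric])
  thus "c * cis \<theta> + c * cis (-\<theta>) = complex_of_real (2 * cos \<theta> / sin x)" unfolding c_def by simp
qed


lemma T_form:
  fixes l \<sigma> \<alpha> :: real and n :: nat
  assumes sx: "sin (pi^2/(2*\<alpha>)) \<noteq> 0" and n: "n \<ge> 1"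
  assumes x_def: "x = pi^2/(2*\<alpha>)"
  assumes c_def: "c = complex_of_real (1 / sin x)" and t_def: "t = complex_of_real (cot x)"
  assumes \<tau>_def: "\<tau> = 2 * cos (l*\<sigma>) / sin x"
  assumes a_def: "a = c * cis (l*\<sigma>)" and b_def: "b = - \<i> * t * cis (-(l*\<sigma>))"
    and cc_def: "cc = \<i> * t * cis (l*\<sigma>)" and d_def: "d = c * cis (-(l*\<sigma>))"
  shows "T_mat (quasi_regular n \<alpha> l) \<sigma> = m2 (of_real (cheb \<tau> n) * a - of_real (cheb \<tau> (n-1)))
      (of_real (cheb \<tau> n) * b) (of_real (cheb \<tau> n) * cc) (of_real (cheb \<tau> n) * d - of_real (cheb \<tau> (n-1)))"
   (is ?T)
    and "eigenvalue (T_mat (quasi_regular n \<alpha> l) \<sigma>) 1 \<longleftrightarrow>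
      (\<exists>q. 2*q \<le> n \<and> cos (l*\<sigma>) = sin x * cos(2*pi*real q/real n))" (is ?E)
    and "a * d - b * cc = 1" "a + d = complex_of_real \<tau>"
proof -
  have sx': "sin x \<noteq> 0" using sx unfolding x_def .
  note MP = M_props[OF sx', of "l*\<sigma>", folded c_def t_def]
  show det: "a * d - b * cc = 1" unfolding a_def b_def cc_def d_def using MP(1) .
  show tr: "a + d = complex_of_real \<tau>" unfolding a_def d_def \<tau>_def using MP(2) .
  have AB: "A_mat \<alpha> * B_mat l \<sigma> = m2 a b cc d"
    unfolding A_m2 B_m2 m2_mult a_def b_def cc_def d_def c_def t_def x_def by (simp add: mult.assoc)
  have nn: "n = Suc (n - 1)" using n by simp
  have TT: "T_mat (quasi_regular n \<alpha> l) \<sigma> = m2 a b cc d ^\<^sub>m Suc (n - 1)"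
    unfolding quasi_regular_def T_pow AB using nn by simp
  show ?T unfolding TT m2_pow[OF det tr] using nn by simp
  have "eigenvalue (T_mat (quasi_regular n \<alpha> l) \<sigma>) 1 \<longleftrightarrow> trc \<tau> (n - 1) = 2"
    unfolding TT by (rule eigen_pow[OF det tr])
  also have "\<dots> \<longleftrightarrow> (\<exists>q. 2*q \<le> n \<and> \<tau> = 2*cos(2*pi*real q/real n))" by (rule trc_eq2[OF n])
  also have "\<dots> \<longleftrightarrow> (\<exists>q. 2*q \<le> n \<and> cos (l*\<sigma>) = sin x * cos(2*pi*real q/real n))"
    unfolding \<tau>_def using sx' by (simp add: field_simps)
  finally show ?E .
qed

lemma qr_iff:
  assumes l: "l > 0" and \<sigma>: "\<sigma> \<ge> 0" and K: "-1 \<le> K" "K \<le> 1"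
  shows "cos (l*\<sigma>) = K \<longleftrightarrow> (\<exists>s m. s \<in> {-1,1} \<and> \<sigma> = (s * arccos K + 2*pi*real m) / l)"
proof -
  have ab: "0 \<le> arccos K" "arccos K \<le> pi" using K by (auto intro: arccos_lbound arccos_ubound)
  have "cos (l*\<sigma>) = K \<longleftrightarrow> (\<exists>s\<in>{-1,1::real}. \<exists>m::int. l*\<sigma> = s * arccos K + 2*pi*m)"
    by (rule cos_inv[OF K])
  also have "\<dots> \<longleftrightarrow> (\<exists>s m. s \<in> {-1,1} \<and> \<sigma> = (s * arccos K + 2*pi*real m) / l)"
  proof
    assume "\<exists>s\<in>{-1,1::real}. \<exists>m::int. l*\<sigma> = s * arccos K + 2*pi*m"
    then obtain s and m :: int where s: "s \<in> {-1,1}" and e: "l*\<sigma> = s * arccos K + 2*pi*m" by blast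
    have "l * \<sigma> \<ge> 0" using l \<sigma> by simp
    have "m \<ge> 0"
    proof (rule ccontr)
      assume "\<not> m \<ge> 0"
      hence "real_of_int m \<le> -1" by simp
      hence "2*pi*real_of_int m \<le> 2*pi*(-1)" using pi_gt_zero by (intro mult_left_mono) auto
      moreover have "s * arccos K \<le> pi" using s ab by auto
      ultimately have "l*\<sigma> < 0" unfolding e using pi_gt_zero by linarith
      thus False using \<open>l * \<sigma> \<ge> 0\<close> by simp
    qed
    hence "real (nat m) = real_of_int m" by simp
    hence "\<sigma> = (s * arccos K + 2*pi*real (nat m)) / l" using e l by (simp add: field_simps)
    thus "\<exists>s m. s \<in> {-1,1} \<and> \<sigma> = (s * arccos K + 2*pi*real m) / l" using s by blast
  next
    assume "\<exists>s m. s \<in> {-1,1} \<and> \<sigma> = (s * arccos K + 2*pi*real m) / l"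
    then obtain s m where s: "s \<in> {-1,1}" and e: "\<sigma> = (s * arccos K + 2*pi*real m) / l" by blast
    have "l*\<sigma> = s * arccos K + 2*pi*real_of_int (int m)" using e l by simp
    thus "\<exists>s\<in>{-1,1::real}. \<exists>m::int. l*\<sigma> = s * arccos K + 2*pi*m" using s by blast
  qed
  finally show ?thesis .
qed


theorem proposition1p10:
  fixes n :: nat and \<alpha> l :: real
  assumes "n \<ge> 1" and "0 < \<alpha>" and "\<alpha> < pi" and "\<not> exceptional_angle \<alpha>" and "l > 0"
  shows "{\<sigma>. quasi_eigenvalue (quasi_regular n \<alpha> l) \<sigma>} =
           {\<sigma>. \<exists>s m q. s \<in> {-1, 1} \<and> q \<le> n div 2 \<and> \<sigma> = qr_value n \<alpha> l s m q} \<inter> {0..} \<and>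
         (\<forall>s m q. s \<in> {-1, 1} \<longrightarrow> q \<le> n div 2 \<longrightarrow> qr_value n \<alpha> l s m q \<ge> 0 \<longrightarrow>
           qev_multiplicity (quasi_regular n \<alpha> l) (qr_value n \<alpha> l s m q) =
             (if (\<not> special_angle \<alpha> \<and> q = 0)
               \<or> (\<not> special_angle \<alpha> \<and> even n \<and> 2 * q = n)
               \<or> (even_special_angle \<alpha> \<and> q = 0 \<and> m = 0)
               \<or> (odd_special_angle \<alpha> \<and> even n \<and> 2 * q = n \<and> m = 0)
              then 1 else 2))"
proof -
  note n = assms(1) and l = assms(5)
  define x where "x = pi^2/(2*\<alpha>)"
  have sx0: "sin x \<noteq> 0" unfolding x_def using sin_ne0[OF assms(2,3,4)] .
  define K where "K q = sin x * cos(2*pi*real q/real n)" for q :: nat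
  have Kb: "-1 \<le> K q \<and> K q \<le> 1" for q
  proof -
    have "\<bar>K q\<bar> = \<bar>sin x\<bar> * \<bar>cos(2*pi*real q/real n)\<bar>" unfolding K_def by (simp add: abs_mult)
    also have "\<dots> \<le> 1 * 1" by (intro mult_mono) auto
    finally show ?thesis by auto
  qed
  have qrv: "qr_value n \<alpha> l s m q = (s * arccos (K q) + 2*pi*real m)/l" for s m q
    unfolding qr_value_def K_def x_def by simp
  have eig: "eigenvalue (T_mat (quasi_regular n \<alpha> l) \<sigma>) 1 \<longleftrightarrow> (\<exists>q. 2*q \<le> n \<and> cos (l*\<sigma>) = K q)" for \<sigma>
    using T_form(2)[OF sx0[unfolded x_def] n x_def refl refl refl refl refl refl refl, of l \<sigma>] unfolding K_def by simp
  have qdiv: "q \<le> n div 2 \<longleftrightarrow> 2*q \<le> n" for q by auto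
  have setpart: "{\<sigma>. quasi_eigenvalue (quasi_regular n \<alpha> l) \<sigma>} =
           {\<sigma>. \<exists>s m q. s \<in> {-1, 1} \<and> q \<le> n div 2 \<and> \<sigma> = qr_value n \<alpha> l s m q} \<inter> {0..}"
  proof (rule Set.set_eqI, rule iffI)
    fix \<sigma> assume "\<sigma> \<in> {\<sigma>. quasi_eigenvalue (quasi_regular n \<alpha> l) \<sigma>}"
    hence \<sigma>: "\<sigma> \<ge> 0" and "\<exists>q. 2*q \<le> n \<and> cos (l*\<sigma>) = K q" unfolding quasi_eigenvalue_def eig by auto
    then obtain q where q: "2*q \<le> n" "cos (l*\<sigma>) = K q" by blast
    from q(2) qr_iff[OF l \<sigma>] Kb obtain s m where "s \<in> {-1,1}" "\<sigma> = (s * arccos (K q) + 2*pi*real m) / l"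
      by blast
    thus "\<sigma> \<in> {\<sigma>. \<exists>s m q. s \<in> {-1, 1} \<and> q \<le> n div 2 \<and> \<sigma> = qr_value n \<alpha> l s m q} \<inter> {0..}"
      using q(1) \<sigma> unfolding qrv qdiv by blast
  next
    fix \<sigma> assume "\<sigma> \<in> {\<sigma>. \<exists>s m q. s \<in> {-1, 1} \<and> q \<le> n div 2 \<and> \<sigma> = qr_value n \<alpha> l s m q} \<inter> {0..}"
    then obtain s m q where s: "s \<in> {-1,1}" and q: "2*q \<le> n" and e: "\<sigma> = (s * arccos (K q) + 2*pi*real m) / l"
      and \<sigma>: "\<sigma> \<ge> 0" unfolding qrv qdiv by auto
    have "cos (l*\<sigma>) = K q" using qr_iff[OF l \<sigma>] Kb s e by blast
    thus "\<sigma> \<in> {\<sigma>. quasi_eigenvalue (quasi_regular n \<alpha> l) \<sigma>}"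
      unfolding quasi_eigenvalue_def mem_Collect_eq eig using \<sigma> q by blast
  qed
  have multpart: "\<forall>s m q. s \<in> {-1, 1} \<longrightarrow> q \<le> n div 2 \<longrightarrow> qr_value n \<alpha> l s m q \<ge> 0 \<longrightarrow>
           qev_multiplicity (quasi_regular n \<alpha> l) (qr_value n \<alpha> l s m q) =
             (if (\<not> special_angle \<alpha> \<and> q = 0)
               \<or> (\<not> special_angle \<alpha> \<and> even n \<and> 2 * q = n)
               \<or> (even_special_angle \<alpha> \<and> q = 0 \<and> m = 0)
               \<or> (odd_special_angle \<alpha> \<and> even n \<and> 2 * q = n \<and> m = 0)
              then 1 else 2)"
  proof (intro allI impI)
    fix s :: real and m q :: nat
    assume s: "s \<in> {-1,1}" and q: "q \<le> n div 2" and pos: "qr_value n \<alpha> l s m q \<ge> 0"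
    define \<sigma> where "\<sigma> = qr_value n \<alpha> l s m q"
    have \<sigma>0: "\<sigma> \<ge> 0" using pos unfolding \<sigma>_def .
    have \<sigma>e: "\<sigma> = (s * arccos (K q) + 2*pi*real m)/l" unfolding \<sigma>_def qrv ..
    have q2: "2*q \<le> n" using q by auto
    have cK: "cos (l*\<sigma>) = K q" using qr_iff[OF l \<sigma>0] Kb s \<sigma>e by blast
    have ev: "eigenvalue (T_mat (quasi_regular n \<alpha> l) \<sigma>) 1" using eig cK q2 by blast
    define \<phi> where "\<phi> = 2*pi*real q/real n"
    have nr: "real n > 0" using n by simp
    have \<phi>b: "0 \<le> \<phi>" "\<phi> \<le> pi"
    proof -
      show "0 \<le> \<phi>" unfolding \<phi>_def by simp
      have "2 * real q \<le> real n" using q2 by linarith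
      hence "2 * pi * real q \<le> pi * real n" using pi_gt_zero by (simp add: mult.assoc mult.commute[of pi] mult_left_mono)
      thus "\<phi> \<le> pi" unfolding \<phi>_def using nr by (simp add: field_simps)
    qed
    have Kphi: "K q = sin x * cos \<phi>" unfolding K_def \<phi>_def ..
    define \<tau> where "\<tau> = 2 * cos (l*\<sigma>) / sin x"
    have tauphi: "\<tau> = 2 * cos \<phi>" using cK Kphi sx0 unfolding \<tau>_def by (simp add: field_simps)
    have arcb: "0 \<le> arccos (K q)" "arccos (K q) \<le> pi" using Kb[of q] by (auto intro: arccos_lbound arccos_ubound)
    have q0phi: "q = 0 \<longleftrightarrow> \<phi> = 0" unfolding \<phi>_def using nr by simp
    have qnphi: "2*q = n \<longleftrightarrow> \<phi> = pi"
    proof -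
      have "\<phi> = pi \<longleftrightarrow> 2*pi*real q = pi * real n" unfolding \<phi>_def using nr by (simp add: field_simps)
      also have "\<dots> \<longleftrightarrow> 2 * real q = real n" using pi_gt_zero by (simp add: mult.commute)
      also have "\<dots> \<longleftrightarrow> 2*q = n" by linarith
      finally show ?thesis by simp
    qed
    have spec_cos: "special_angle \<alpha> \<longleftrightarrow> cos x = 0" unfolding x_def using special_iff[OF assms(2,3)] by simp
    have sxsp: "sin x = 1 \<or> sin x = -1" if "special_angle \<alpha>"
    proof -
      have "(sin x)^2 = 1" using that spec_cos sin_cos_squared_add[of x] by simp
      thus ?thesis by (simp add: power2_eq_1_iff)
    qed
    have sp_even: "even_special_angle \<alpha> \<Longrightarrow> special_angle \<alpha>"
      unfolding even_special_angle_def special_angle_def by blast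
    have sp_odd: "odd_special_angle \<alpha> \<Longrightarrow> special_angle \<alpha>"
      unfolding odd_special_angle_def special_angle_def by blast
    have spec_zero: "\<sigma> = 0" if "(even_special_angle \<alpha> \<and> q = 0 \<and> m = 0) \<or> (odd_special_angle \<alpha> \<and> even n \<and> 2 * q = n \<and> m = 0)"
    proof -
      have "K q = 1 \<and> m = 0"
      proof (cases "even_special_angle \<alpha> \<and> q = 0 \<and> m = 0")
        case True
        hence "sin x = 1" using special_parity(3)[OF sp_even] unfolding x_def by blast
        thus ?thesis using True unfolding K_def by simp
      next
        case False
        with that have h: "odd_special_angle \<alpha>" "2*q = n" "m = 0" by auto
        hence "sin x = -1" using special_parity(4)[OF sp_odd] unfolding x_def by blast
        moreover have "\<phi> = pi" using h qnphi by simp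
        ultimately show ?thesis using Kphi h by simp
      qed
      thus ?thesis using \<sigma>e by simp
    qed
    let ?C = "(\<not> special_angle \<alpha> \<and> q = 0)
               \<or> (\<not> special_angle \<alpha> \<and> even n \<and> 2 * q = n)
               \<or> (even_special_angle \<alpha> \<and> q = 0 \<and> m = 0)
               \<or> (odd_special_angle \<alpha> \<and> even n \<and> 2 * q = n \<and> m = 0)"
    have "qev_multiplicity (quasi_regular n \<alpha> l) \<sigma> = (if ?C then 1 else 2)"
    proof (cases "\<sigma> = 0")
      case True
      have "s * arccos (K q) + 2*pi*real m = 0" using True \<sigma>e l by simp
      have m0: "m = 0"
      proof (rule ccontr)
        assume "m \<noteq> 0"
        hence "2*pi*real m \<ge> 2*pi*1" using pi_gt_zero by (intro mult_left_mono) auto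
        moreover have "s * arccos (K q) \<ge> -pi" using s arcb by auto
        ultimately have "s * arccos (K q) + 2*pi*real m > 0" using pi_gt_zero by linarith
        thus False using \<open>s * arccos (K q) + 2*pi*real m = 0\<close> by simp
      qed
      hence "s * arccos (K q) = 0" using \<open>s * arccos (K q) + 2*pi*real m = 0\<close> by simp
      hence "arccos (K q) = 0" using s by auto
      hence "K q = 1" using Kb[of q] cos_arccos[of "K q"] by simp
      hence prod: "sin x * cos \<phi> = 1" using Kphi by simp
      have sq: "(sin x)^2 = 1"
      proof -
        have u: "(sin x)^2 \<le> 1" using sin_cos_squared_add[of x] zero_le_power2[of "cos x"] by linarith
        have v: "(cos \<phi>)^2 \<le> 1" using sin_cos_squared_add[of \<phi>] zero_le_power2[of "sin \<phi>"] by linarith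
        have "(sin x)^2 * (cos \<phi>)^2 = 1" using prod by (metis power_mult_distrib power_one)
        moreover have "(sin x)^2 * (cos \<phi>)^2 \<le> (sin x)^2 * 1" using v by (intro mult_left_mono) auto
        ultimately show ?thesis using u by linarith
      qed
      hence sp: "special_angle \<alpha>" using spec_cos sin_cos_squared_add[of x] by simp
      have "?C"
      proof (cases "sin x = 1")
        case True
        hence "cos \<phi> = cos 0" using prod by simp
        hence "\<phi> = 0" using cos_inj_pi[of \<phi> 0] \<phi>b by simp
        hence "q = 0" using q0phi by simp
        moreover have "even_special_angle \<alpha>" using special_parity(1)[OF sp] True unfolding x_def by simp
        ultimately show ?thesis using m0 by simp
      next
        case False
        hence sm: "sin x = -1" using sxsp[OF sp] by simp
        hence "cos \<phi> = cos pi" using prod by simp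
        hence "\<phi> = pi" using cos_inj_pi[of \<phi> pi] \<phi>b by simp
        hence "2*q = n" using qnphi by simp
        moreover have "odd_special_angle \<alpha>" using special_parity(2)[OF sp] sm unfolding x_def by simp
        ultimately show ?thesis using m0 by auto
      qed
      thus ?thesis unfolding qev_multiplicity_def using True by simp
    next
      case False
      define c where "c = complex_of_real (1 / sin x)"
      define t where "t = complex_of_real (cot x)"
      define a where "a = c * cis (l*\<sigma>)"
      define b where "b = - \<i> * t * cis (-(l*\<sigma>))"
      define cc where "cc = \<i> * t * cis (l*\<sigma>)"
      define d where "d = c * cis (-(l*\<sigma>))"
      define U1 where "U1 = cheb \<tau> n"
      define U0 where "U0 = cheb \<tau> (n-1)"
      have TF: "T_mat (quasi_regular n \<alpha> l) \<sigma> = m2 (of_real U1 * a - of_real U0) (of_real U1 * b)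
          (of_real U1 * cc) (of_real U1 * d - of_real U0)"
        unfolding U1_def U0_def
        by (rule T_form(1)[OF sx0[unfolded x_def] n x_def c_def t_def \<tau>_def a_def b_def cc_def d_def])
      have detf: "a * d - b * cc = 1"
        by (rule T_form(3)[OF sx0[unfolded x_def] n x_def c_def t_def \<tau>_def a_def b_def cc_def d_def])
      have tr: "a + d = complex_of_real \<tau>"
        by (rule T_form(4)[OF sx0[unfolded x_def] n x_def c_def t_def \<tau>_def a_def b_def cc_def d_def])
      have mult: "qev_multiplicity (quasi_regular n \<alpha> l) \<sigma> = kernel_dim (m2 (of_real U1 * a - of_real U0 - 1)
          (of_real U1 * b) (of_real U1 * cc) (of_real U1 * d - of_real U0 - 1))"
        unfolding qev_multiplicity_def dim_gen_eigenspace_def TF using False by (simp add: char_m2)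
      have evd: "(of_real U1 * a - of_real U0 - 1) * (of_real U1 * d - of_real U0 - 1) - (of_real U1 * b) * (of_real U1 * cc) = 0"
        using ev unfolding TF eigenvalue_m2 .
      have tzero: "special_angle \<alpha> \<longleftrightarrow> t = 0"
        unfolding spec_cos t_def cot_def using sx0 by simp
      have bzero: "b = 0 \<longleftrightarrow> t = 0" "cc = 0 \<longleftrightarrow> t = 0" unfolding b_def cc_def by auto
      have Cfalse: "\<not> ?C" if "special_angle \<alpha>"
        using spec_zero False that by blast
      have sin2pq: "sin (2*pi*real q) = 0" "cos (2*pi*real q) = 1"
      proof -
        have "real (2*q) * pi = 2*pi*real q" by simp
        thus "sin (2*pi*real q) = 0" using sin_npi[of "2*q"] by metis
        show "cos (2*pi*real q) = 1" using cos_int_2pin[of "int q"] by simp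
      qed
      have nphi: "real n * \<phi> = 2*pi*real q" unfolding \<phi>_def using nr by simp
      have nn1: "real (n - 1) = real n - 1" using n by simp
      consider (A) "q \<noteq> 0 \<and> 2*q \<noteq> n" | (B) "q = 0" | (C) "q \<noteq> 0 \<and> 2*q = n" by blast
      then show ?thesis
      proof cases
        case A
        hence p: "0 < \<phi>" "\<phi> < pi" using q0phi qnphi \<phi>b by auto
        have sp: "sin \<phi> > 0" using sin_gt_zero[OF p] .
        have "U1 * sin \<phi> = sin (real n * \<phi>)" unfolding U1_def tauphi by (rule cheb_sin)
        hence u1: "U1 = 0" using sp sin2pq nphi by simp
        have "U0 * sin \<phi> = sin (real (n-1) * \<phi>)" unfolding U0_def tauphi by (rule cheb_sin)
        also have "real (n-1) * \<phi> = 2*pi*real q - \<phi>" unfolding nn1 using nphi by (simp add: algebra_simps)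
        also have "sin (2*pi*real q - \<phi>) = - sin \<phi>" unfolding sin_diff sin2pq by simp
        finally have "(U0 + 1) * sin \<phi> = 0" by (simp add: algebra_simps)
        hence u0: "U0 = -1" using sp by simp
        have "qev_multiplicity (quasi_regular n \<alpha> l) \<sigma> = 2"
          unfolding mult u1 u0 using kd_zero by simp
        moreover have "\<not> ?C" using A by auto
        ultimately show ?thesis by simp
      next
        case B
        have t2: "\<tau> = 2" using tauphi q0phi B by simp
        have u1: "U1 = real n" unfolding U1_def t2 cheb_2 ..
        have u0: "U0 = real n - 1" unfolding U0_def t2 cheb_2 nn1 ..
        show ?thesis
        proof (cases "special_angle \<alpha>")
          case False
          hence "b \<noteq> 0" using tzero bzero by simp
          hence b1: "of_real U1 * b \<noteq> 0" using u1 nr by simp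
          have "qev_multiplicity (quasi_regular n \<alpha> l) \<sigma> = 1"
            unfolding mult by (rule kd_one[OF _ evd]) (use b1 in simp)
          moreover have ?C using False B by simp
          ultimately show ?thesis by simp
        next
          case True
          hence bc0: "b = 0" "cc = 0" using tzero bzero by auto
          have ad: "a * d = 1" using detf unfolding bc0 by simp
          have apd: "a + d = 2" using tr t2 by simp
          have "(a - 1) * (a - 1) = a * a - a * 2 + 1" by (simp add: algebra_simps)
          also have "\<dots> = a * a - a * (a + d) + a * d" unfolding apd ad ..
          also have "\<dots> = 0" by (simp add: algebra_simps)
          finally have a1: "a = 1" by simp
          hence d1: "d = 1" using apd by simp
          have "qev_multiplicity (quasi_regular n \<alpha> l) \<sigma> = 2"
            unfolding mult u1 u0 a1 d1 bc0 using kd_zero by simp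
          thus ?thesis using Cfalse[OF True] by simp
        qed
      next
        case C
        have nev: "even n" using C by auto
        have t2: "\<tau> = -2" using tauphi qnphi C by simp
        have u1: "U1 = - real n" unfolding U1_def t2 cheb_m2 using nev by simp
        have u0: "U0 = real n - 1" unfolding U0_def t2 cheb_m2 nn1 using nev n
          by (simp add: neg_one_even_power)
        show ?thesis
        proof (cases "special_angle \<alpha>")
          case False
          hence "b \<noteq> 0" using tzero bzero by simp
          hence b1: "of_real U1 * b \<noteq> 0" using u1 nr by simp
          have "qev_multiplicity (quasi_regular n \<alpha> l) \<sigma> = 1"
            unfolding mult by (rule kd_one[OF _ evd]) (use b1 in simp)
          moreover have ?C using False C nev by simp
          ultimately show ?thesis by simp
        next
          case True
          hence bc0: "b = 0" "cc = 0" using tzero bzero by auto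
          have ad: "a * d = 1" using detf unfolding bc0 by simp
          have apd: "a + d = -2" using tr t2 by simp
          have "(a + 1) * (a + 1) = a * a - a * (-2) + 1" by (simp add: algebra_simps)
          also have "\<dots> = a * a - a * (a + d) + a * d" unfolding apd ad ..
          also have "\<dots> = 0" by (simp add: algebra_simps)
          finally have a1: "a = -1" by (simp add: add_eq_0_iff2)
          hence d1: "d = -1" using apd by (simp add: add_eq_0_iff)
          have "qev_multiplicity (quasi_regular n \<alpha> l) \<sigma> = 2"
            unfolding mult u1 u0 a1 d1 bc0 using kd_zero by simp
          thus ?thesis using Cfalse[OF True] by simp
        qed
      qed
    qed
    thus "qev_multiplicity (quasi_regular n \<alpha> l) (qr_value n \<alpha> l s m q) = (if ?C then 1 else 2)"
      unfolding \<sigma>_def .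
  qed
  show ?thesis using setpart multpart by blast
qed


end
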